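(* Let the system have Hilbert-space dimension $d$. Let $\mathcal G$ be a set of unitary gates, containing the identity, that is universal (every unitary on the $d$-dimensional space is a limit of finite products of elements of $\mathcal G$), and let $C_{\mathcal G}(U)=\min\{r\in\mathbb N: U=U_r\cdots U_1,\ U_j\in\mathcal G\}$ (infinite if no such finite product exists). Let $\mathcal P$ be a set of projectors containing $\mathbb 1$ and at least one rank-1 projector, and let $\mathcal M^r=\{U^\dagger PU: P\in\mathcal P,\ C_{\mathcal G}(U)\le r\}$, $\mathcal M^\infty=\overline{\bigcup_{r\ge0}\mathcal M^r}$. Let $\mathcal X=\{\log\operatorname{tr}P: P\in\mathcal P\}\subseteq[0,\log d]$ and $q=\sup\{b-a: (a,b)\subseteq[0,\log d]\setminus\mathcal X\}$. Then $\mathcal M^\infty$ is $q$-quasiuniversal with respect to $\mathbb 1$.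
   Context: Natural logarithms; POVM effect = operator $0\le Q\le\mathbb 1$; $\overline{\,\cdot\,}$ is topological closure. A set $\mathcal M^\infty$ of POVM effects is $q$-quasiuniversal with respect to a positive semidefinite $\Gamma$ if for every POVM effect $Q$ with $\|Q\|_\infty=1$ and every $g\in(0,1)$ there exist $\tilde Q,\tilde Q'\in\mathcal M^\infty$ with $g\tilde Q\le Q\le(1-g)\tilde Q'+g\mathbb 1$ and $\log\operatorname{tr}(\tilde Q'\Gamma)-\log\operatorname{tr}(\tilde Q\Gamma)\le q$. *)

theory Defs
  imports "HOL-Analysis.Analysis" "HOL-Library.Extended_Nat"
begin

type_synonym 'n cmat = "complex^'n^'n"

definition cadj :: "'n::finite cmat \<Rightarrow> 'n cmat" where
  "cadj A = (\<chi> i j. cnj (A $ j $ i))"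

text \<open>Positive semidefinite: the sesquilinear form is real and nonnegative for every vector
(over the complex numbers this also forces A to be Hermitian).\<close>
definition psd :: "'n::finite cmat \<Rightarrow> bool" where
  "psd A \<longleftrightarrow> (\<forall>v::complex^'n.
      let z = (\<Sum>i\<in>UNIV. cnj (v $ i) * (A *v v) $ i) in Im z = 0 \<and> 0 \<le> Re z)"

definition loewner_le :: "'n::finite cmat \<Rightarrow> 'n cmat \<Rightarrow> bool" where
  "loewner_le A B \<longleftrightarrow> psd (B - A)"

definition op_norm :: "'n::finite cmat \<Rightarrow> real" where
  "op_norm A = onorm (\<lambda>v::complex^'n. A *v v)"

definition povm_effect :: "'n::finite cmat \<Rightarrow> bool" where
  "povm_effect Q \<longleftrightarrow> loewner_le 0 Q \<and> loewner_le Q (mat 1)"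

definition unitary_mat :: "'n::finite cmat \<Rightarrow> bool" where
  "unitary_mat U \<longleftrightarrow> U ** cadj U = mat 1 \<and> cadj U ** U = mat 1"

definition projector :: "'n::finite cmat \<Rightarrow> bool" where
  "projector P \<longleftrightarrow> P ** P = P \<and> cadj P = P"

text \<open>Product U_r ... U_1 of a list [U_1, ..., U_r] of gates (empty product = identity).\<close>
definition circuit_prod :: "'n::finite cmat list \<Rightarrow> 'n cmat" where
  "circuit_prod Us = foldl (\<lambda>A U. U ** A) (mat 1) Us"

definition universal_gate_set :: "'n::finite cmat set \<Rightarrow> bool" where
  "universal_gate_set G \<longleftrightarrow> (\<forall>U. unitary_mat U \<longrightarrow>
      U \<in> closure {circuit_prod Us | Us. set Us \<subseteq> G})"

definition circuit_complexity :: "'n::finite cmat set \<Rightarrow> 'n cmat \<Rightarrow> enat" where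
  "circuit_complexity G U =
     (if \<exists>Us. set Us \<subseteq> G \<and> circuit_prod Us = U
      then enat (LEAST r. \<exists>Us. length Us = r \<and> set Us \<subseteq> G \<and> circuit_prod Us = U)
      else \<infinity>)"

definition M_r :: "'n::finite cmat set \<Rightarrow> 'n cmat set \<Rightarrow> nat \<Rightarrow> 'n cmat set" where
  "M_r G PP r = {cadj U ** P ** U | U P. P \<in> PP \<and> circuit_complexity G U \<le> enat r}"

definition M_infty :: "'n::finite cmat set \<Rightarrow> 'n cmat set \<Rightarrow> 'n cmat set" where
  "M_infty G PP = closure (\<Union>r. M_r G PP r)"

text \<open>q-quasiuniversality w.r.t. Gamma. The paper's log of a vanishing trace is -infinity;
 the positivity conditions on the traces encode that (Isabelle's ln 0 = 0).\<close>
definition quasiuniversal :: "'n::finite cmat set \<Rightarrow> real \<Rightarrow> 'n cmat \<Rightarrow> bool" where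
  "quasiuniversal M q \<Gamma> \<longleftrightarrow>
     (\<forall>Q g. povm_effect Q \<and> op_norm Q = 1 \<and> 0 < g \<and> g < 1 \<longrightarrow>
        (\<exists>Qt Qt'. Qt \<in> M \<and> Qt' \<in> M \<and>
           loewner_le (g *\<^sub>R Qt) Q \<and>
           loewner_le Q ((1 - g) *\<^sub>R Qt' + g *\<^sub>R mat 1) \<and>
           0 < Re (trace (Qt ** \<Gamma>)) \<and> 0 < Re (trace (Qt' ** \<Gamma>)) \<and>
           ln (Re (trace (Qt' ** \<Gamma>))) - ln (Re (trace (Qt ** \<Gamma>))) \<le> q))"

end

theory Submission
  imports Defs
begin



definition cinner :: "complex^'n::finite \<Rightarrow> complex^'n \<Rightarrow> complex" where
  "cinner u v = (\<Sum>i\<in>UNIV. cnj (u $ i) * v $ i)"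

lemma psd_cinner: "psd A \<longleftrightarrow> (\<forall>v. Im (cinner v (A *v v)) = 0 \<and> 0 \<le> Re (cinner v (A *v v)))"
  by (simp add: psd_def cinner_def Let_def)

lemma cinner_adj:
  fixes A :: "'n::finite cmat" and u v :: "complex^'n"
  shows "cinner u (A *v v) = cinner (cadj A *v u) v"
proof -
  have 1: "cinner u (A *v v) = (\<Sum>i\<in>UNIV. \<Sum>k\<in>UNIV. cnj (u$i) * A$i$k * v$k)"
    unfolding cinner_def matrix_vector_mult_def by (simp add: sum_distrib_left mult.assoc)
  have 2: "cinner (cadj A *v u) v = (\<Sum>k\<in>UNIV. \<Sum>i\<in>UNIV. cnj (u$i) * A$i$k * v$k)"
    unfolding cinner_def matrix_vector_mult_def cadj_def by (simp add: sum_distrib_left sum_distrib_right mult.commute mult.left_commute)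
  have 3: "(\<Sum>k\<in>UNIV. \<Sum>i\<in>UNIV. cnj (u$i) * A$i$k * v$k) = (\<Sum>i\<in>UNIV. \<Sum>k\<in>UNIV. cnj (u$i) * A$i$k * v$k)"
    by (rule sum.swap)
  show ?thesis using 1 2 3 by simp
qed

lemma cadj_cadj[simp]: "cadj (cadj A) = A"
  by (simp add: cadj_def vec_eq_iff)

lemma cadj_mult: "cadj (A ** B) = cadj B ** cadj A"
  by (simp add: cadj_def vec_eq_iff matrix_matrix_mult_def mult.commute)

lemma cadj_mat1[simp]: "cadj (mat 1 :: 'n::finite cmat) = mat 1"
  by (simp add: cadj_def vec_eq_iff mat_def)

lemma unitary_mult: "unitary_mat U \<Longrightarrow> unitary_mat V \<Longrightarrow> unitary_mat (U ** V)"
  unfolding unitary_mat_def cadj_mult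
  by (metis matrix_mul_assoc matrix_mul_lid matrix_mul_rid)

lemma unitary_cadj: "unitary_mat U \<Longrightarrow> unitary_mat (cadj U)"
  by (simp add: unitary_mat_def)

lemma unitary_iff1: "cadj U ** U = mat 1 \<Longrightarrow> unitary_mat U"
  by (simp add: unitary_mat_def matrix_left_right_inverse)

lemma cinner_unitary: "unitary_mat V \<Longrightarrow> cinner (V *v x) (V *v y) = cinner x y"
  by (simp add: cinner_adj matrix_vector_mul_assoc unitary_mat_def)

lemma cinner_self: "cinner x x = complex_of_real ((norm x)^2)"
proof -
  have "(norm x)^2 = (\<Sum>i\<in>UNIV. (cmod (x$i))^2)"
    unfolding norm_vec_def L2_set_def by (simp add: sum_nonneg)
  have "cinner x x = (\<Sum>i\<in>UNIV. complex_of_real ((cmod (x$i))^2))"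
    unfolding cinner_def
    apply (rule sum.cong[OF refl])
    apply (subst complex_norm_square) by simp
  then show ?thesis using \<open>(norm x)^2 = _\<close> by (metis of_real_sum)
qed

lemma norm_unitary: "unitary_mat V \<Longrightarrow> norm (V *v x) = norm x"
proof -
  assume "unitary_mat V"
  then have "(norm (V *v x))^2 = (norm x)^2"
    by (metis cinner_self cinner_unitary of_real_eq_iff)
  then show ?thesis by (simp add: power2_eq_iff_nonneg)
qed




definition dg :: "('n::finite \<Rightarrow> real) \<Rightarrow> 'n cmat" where
  "dg r = (\<chi> i j. if i = j then complex_of_real (r i) else 0)"

abbreviation conjd :: "'n::finite cmat \<Rightarrow> ('n \<Rightarrow> real) \<Rightarrow> 'n cmat" where
  "conjd V r \<equiv> V ** dg r ** cadj V"

lemma dg_mult_vec: "dg r *v w = (\<chi> j. complex_of_real (r j) * w$j)"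
proof -
  have "\<And>i. (\<Sum>j\<in>UNIV. (if i = j then complex_of_real (r i) else 0) * w$j) = complex_of_real (r i) * w$i"
    by (simp add: if_distrib[of "\<lambda>x. x * _"] cong: if_cong)
  then show ?thesis by (simp add: dg_def matrix_vector_mult_def vec_eq_iff)
qed

lemma conjd_vec: "unitary_mat V \<Longrightarrow> conjd V r *v (V *v w) = V *v (dg r *v w)"
proof -
  assume u: "unitary_mat V"
  have "V ** dg r ** cadj V ** V = V ** dg r" using u by (metis matrix_mul_assoc matrix_mul_rid unitary_mat_def)
  then show ?thesis by (simp add: matrix_vector_mul_assoc)
qed

lemma cinner_dg: "cinner w (dg r *v w) = (\<Sum>j\<in>UNIV. complex_of_real (r j * (cmod (w$j))^2))"
  unfolding cinner_def dg_mult_vec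
  apply (rule sum.cong[OF refl])
  by (simp add: complex_norm_square[symmetric] mult.commute)

lemma form_diag: "unitary_mat V \<Longrightarrow>
   cinner (V *v w) (conjd V r *v (V *v w)) = (\<Sum>j\<in>UNIV. complex_of_real (r j * (cmod (w$j))^2))"
  by (simp add: conjd_vec cinner_unitary cinner_dg)

lemma psd_conjd:
  assumes "unitary_mat V" "\<And>j. 0 \<le> r j"
  shows "psd (conjd V r)"
  unfolding psd_cinner
proof
  fix v :: "complex^'a"
  define w where "w = cadj V *v v"
  have vw: "v = V *v w" using assms(1) unfolding w_def
    by (simp add: matrix_vector_mul_assoc unitary_mat_def)
  have "cinner v (conjd V r *v v) = (\<Sum>j\<in>UNIV. complex_of_real (r j * (cmod (w$j))^2))"
    unfolding vw by (rule form_diag[OF assms(1)])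
  then have e: "cinner v (conjd V r *v v) = complex_of_real (\<Sum>j\<in>UNIV. r j * (cmod ((cadj V *v v)$j))^2)"
    unfolding of_real_sum w_def .
  have "0 \<le> (\<Sum>j\<in>UNIV. r j * (cmod ((cadj V *v v)$j))^2)"
    by (intro sum_nonneg mult_nonneg_nonneg assms(2)) simp
  then show "Im (cinner v (conjd V r *v v)) = 0 \<and> 0 \<le> Re (cinner v (conjd V r *v v))"
    unfolding e by simp
qed

lemma eig_form:
  assumes "unitary_mat V"
  shows "cinner (V *v axis j 1) (conjd V r *v (V *v axis j 1)) = complex_of_real (r j)"
proof -
  have "\<And>i. complex_of_real (r i * (cmod ((axis j 1 :: complex^'a)$i))^2) = (if i = j then complex_of_real (r j) else 0)"
    by (simp add: axis_def)
  then have "(\<Sum>i\<in>UNIV. complex_of_real (r i * (cmod ((axis j 1 :: complex^'a)$i))^2)) = complex_of_real (r j)"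
    by simp
  then show ?thesis using form_diag[OF assms] by simp
qed

lemma psd_conjd_nonneg:
  assumes "unitary_mat V" "psd (conjd V r)"
  shows "0 \<le> r j"
  using assms(2) eig_form[OF assms(1), of j r] unfolding psd_cinner
  by (metis Re_complex_of_real)

lemma conjd_entry: "conjd V r $ i $ k = (\<Sum>j\<in>UNIV. V$i$j * complex_of_real (r j) * cnj (V$k$j))"
  by (simp add: matrix_matrix_mult_def dg_def cadj_def if_distrib sum_distrib_right cong: if_cong)

lemma conjd_add: "conjd V r + conjd V s = conjd V (\<lambda>j. r j + s j)"
  by (simp add: vec_eq_iff conjd_entry sum.distrib[symmetric] distrib_left distrib_right)

lemma conjd_diff: "conjd V r - conjd V s = conjd V (\<lambda>j. r j - s j)"
  by (simp add: vec_eq_iff conjd_entry sum_subtractf[symmetric] right_diff_distrib left_diff_distrib)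

lemma conjd_scale: "c *\<^sub>R conjd V r = conjd V (\<lambda>j. c * r j)"
  by (simp add: vec_eq_iff conjd_entry scaleR_sum_right) (simp add: scaleR_conv_of_real mult.assoc mult.left_commute)

lemma conjd_one: "unitary_mat V \<Longrightarrow> mat 1 = conjd V (\<lambda>_. 1)"
proof -
  have "dg (\<lambda>_. 1) = (mat 1 :: 'a cmat)" by (simp add: dg_def mat_def vec_eq_iff)
  then show "unitary_mat V \<Longrightarrow> ?thesis" by (simp add: unitary_mat_def)
qed

lemma trace_conjd: "unitary_mat V \<Longrightarrow> trace (conjd V r) = complex_of_real (\<Sum>j\<in>UNIV. r j)"
proof -
  assume u: "unitary_mat V"
  have "trace (conjd V r) = trace (dg r ** cadj V ** V)"
    by (metis matrix_mul_assoc trace_mul_sym)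
  also have "\<dots> = trace (dg r)" using u by (simp add: unitary_mat_def flip: matrix_mul_assoc)
  also have "\<dots> = complex_of_real (\<Sum>j\<in>UNIV. r j)" by (simp add: trace_def dg_def)
  finally show ?thesis .
qed




lemma cinner_add_left: "cinner (x + y) z = cinner x z + cinner y z"
  by (simp add: cinner_def sum.distrib distrib_right)
lemma cinner_add_right: "cinner z (x + y) = cinner z x + cinner z y"
  by (simp add: cinner_def sum.distrib distrib_left)
lemma cinner_diff_left: "cinner (x - y) z = cinner x z - cinner y z"
  by (simp add: cinner_def sum_subtractf left_diff_distrib)
lemma cinner_diff_right: "cinner z (x - y) = cinner z x - cinner z y"
  by (simp add: cinner_def sum_subtractf right_diff_distrib)
lemma cinner_scale_left: "cinner (c *s x) z = cnj c * cinner x z"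
  by (simp add: cinner_def sum_distrib_left mult.assoc)
lemma cinner_scale_right: "cinner z (c *s x) = c * cinner z x"
  by (simp add: cinner_def sum_distrib_left mult.left_commute)
lemma cinner_scaleR_left: "cinner (c *\<^sub>R x) z = of_real c * cinner x z"
  by (simp add: cinner_def sum_distrib_left) (simp add: scaleR_conv_of_real mult.assoc)
lemma cinner_scaleR_right: "cinner z (c *\<^sub>R x) = of_real c * cinner z x"
  by (simp add: cinner_def sum_distrib_left) (simp add: scaleR_conv_of_real mult.left_commute)
lemma cinner_sum_right: "cinner z (\<Sum>e\<in>S. f e) = (\<Sum>e\<in>S. cinner z (f e))"
  by (simp add: cinner_def sum_distrib_left sum_component) (rule sum.swap)
lemma cinner_zero_right[simp]: "cinner z 0 = 0"
  by (simp add: cinner_def)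
lemma cinner_sym: "cinner u v = cnj (cinner v u)"
  by (simp add: cinner_def mult.commute)
lemma inner_cinner: "inner x y = Re (cinner x y)"
  by (simp add: inner_vec_def cinner_def Re_sum inner_complex_def)

lemma mv_add: "A *v (x + y) = A *v x + A *v (y :: complex^'n::finite)"
  by (simp add: matrix_vector_mult_def vec_eq_iff sum.distrib distrib_left)
lemma mv_diff: "A *v (x - y) = A *v x - A *v (y :: complex^'n::finite)"
  by (simp add: matrix_vector_mult_def vec_eq_iff sum_subtractf right_diff_distrib)
lemma mv_scale: "A *v (c *s x) = c *s (A *v (x :: complex^'n::finite))"
  by (simp add: matrix_vector_mult_def vec_eq_iff sum_distrib_left mult.left_commute)
lemma mv_scaleR: "A *v (c *\<^sub>R x) = c *\<^sub>R (A *v (x :: complex^'n::finite))"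
  by (simp add: matrix_vector_mult_def vec_eq_iff scaleR_sum_right)

lemma cinner_axis: "cinner (axis a 1) ((A::'n::finite cmat) *v axis b 1) = A$a$b"
proof -
  have m: "(A *v axis b 1) $ i = A$i$b" for i
  proof -
    have "\<And>j. A$i$j * (axis b 1::complex^'n)$j = (if j = b then A$i$b else 0)" by (simp add: axis_def)
    then show ?thesis by (simp add: matrix_vector_mult_def)
  qed
  have "\<And>i. cnj ((axis a 1::complex^'n)$i) * (A *v axis b 1)$i = (if i = a then A$a$b else 0)"
    by (simp only: m) (simp add: axis_def)
  then show ?thesis unfolding cinner_def by simp
qed

lemma psd_herm:
  assumes "psd (A::'n::finite cmat)"
  shows "cadj A = A"
proof -
  let ?f = "\<lambda>v. cinner v (A *v v)"
  have im0: "Im (?f v) = 0" for v using assms by (simp add: psd_cinner)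
  have exp: "?f (axis a 1 + c *s axis b 1) = A$a$a + c * A$a$b + cnj c * A$b$a + cnj c * c * A$b$b" for a b c
    by (simp add: mv_add mv_scale cinner_add_left cinner_add_right cinner_scale_left cinner_scale_right cinner_axis algebra_simps)
  have "cadj A $ a $ b = A $ a $ b" for a b
  proof -
    have 1: "Im (A$a$a) = 0" "Im (A$b$b) = 0" using im0[of "axis a 1"] im0[of "axis b 1"] by (simp_all add: cinner_axis)
    have 2: "Im (A$a$a + 1 * A$a$b + cnj 1 * A$b$a + cnj 1 * 1 * A$b$b) = 0"
      using im0[of "axis a 1 + 1 *s axis b 1"] unfolding exp .
    have 3: "Im (A$a$a + \<i> * A$a$b + cnj \<i> * A$b$a + cnj \<i> * \<i> * A$b$b) = 0"
      using im0[of "axis a 1 + \<i> *s axis b 1"] unfolding exp .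
    from 1 2 3 show ?thesis by (simp add: cadj_def complex_eq_iff)
  qed
  then show ?thesis by (simp add: vec_eq_iff)
qed

lemma herm_form_real: "cadj A = A \<Longrightarrow> Im (cinner v (A *v v)) = 0"
  by (metis cinner_adj cinner_sym cnj.simps(2) neg_equal_zero)

lemma herm_inner: "cadj A = A \<Longrightarrow> inner x (A *v y) = inner (A *v x) y"
  by (metis cinner_adj inner_cinner)




lemma quad_zero:
  fixes a b :: real
  assumes h: "\<And>t. a * t + b * t^2 \<le> 0" and a: "0 \<le> a"
  shows "a = 0"
proof (rule ccontr)
  assume "a \<noteq> 0" then have ap: "a > 0" using a by simp
  define t where "t = a / (2 * (\<bar>b\<bar> + 1))"
  have tp: "t > 0" using ap by (simp add: t_def)
  have "\<bar>b\<bar> * t = a * (\<bar>b\<bar> / (2 * (\<bar>b\<bar> + 1)))" unfolding t_def by simp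
  moreover have "\<bar>b\<bar> / (2 * (\<bar>b\<bar> + 1)) < 1" by (simp add: field_simps)
  ultimately have lt: "\<bar>b\<bar> * t < a" using ap
    by (metis mult_less_cancel_left_pos mult.right_neutral)
  have "b * t^2 \<ge> - \<bar>b\<bar> * t^2"
    by (intro mult_right_mono) auto
  moreover have "a * t - \<bar>b\<bar> * t^2 = t * (a - \<bar>b\<bar> * t)" by (simp add: power2_eq_square algebra_simps)
  moreover have "t * (a - \<bar>b\<bar> * t) > 0" using tp lt by simp
  ultimately have "a * t + b * t^2 > 0" by linarith
  then show False using h[of t] by linarith
qed

lemma continuous_cinner: "continuous_on UNIV (\<lambda>v. cinner e (v::complex^'n::finite))"
  unfolding cinner_def by (intro continuous_intros)

lemma continuous_form: "continuous_on UNIV (\<lambda>v. inner v ((A::'n::finite cmat) *v v))"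
  unfolding matrix_vector_mult_def inner_vec_def by (intro continuous_intros)




lemma eig_exists:
  fixes A :: "'n::finite cmat"
  assumes herm: "cadj A = A"
    and eig: "\<forall>e\<in>E. \<exists>l. A *v e = l *s e"
    and w: "w \<noteq> 0" "\<forall>e\<in>E. cinner e w = 0"
  shows "\<exists>u. norm u = 1 \<and> (\<forall>e\<in>E. cinner e u = 0) \<and> (\<exists>m::real. A *v u = m *\<^sub>R u)"
proof -
  define S where "S = {v::complex^'n. \<forall>e\<in>E. cinner e v = 0}"
  have Sadd: "x \<in> S \<Longrightarrow> y \<in> S \<Longrightarrow> x + y \<in> S" for x y by (simp add: S_def cinner_add_right)
  have Sdiff: "x \<in> S \<Longrightarrow> y \<in> S \<Longrightarrow> x - y \<in> S" for x y by (simp add: S_def cinner_diff_right)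
  have Sscale: "x \<in> S \<Longrightarrow> c *\<^sub>R x \<in> S" for x c by (simp add: S_def cinner_scaleR_right)
  have Sinv: "x \<in> S \<Longrightarrow> A *v x \<in> S" for x
  proof -
    assume x: "x \<in> S"
    { fix e assume e: "e \<in> E"
      then obtain l where l: "A *v e = l *s e" using eig by blast
      have "cinner e (A *v x) = cinner (A *v e) x" using herm by (simp add: cinner_adj)
      also have "\<dots> = 0" using x e by (simp add: l cinner_scale_left S_def)
      finally have "cinner e (A *v x) = 0" . }
    then show ?thesis by (simp add: S_def)
  qed
  have closedS: "closed S"
  proof -
    have "S = (\<Inter>e\<in>E. {v. cinner e v = 0})" by (auto simp: S_def)
    moreover have "closed {v. cinner e v = (0::complex)}" for e
      using continuous_cinner[of e] by (intro closed_Collect_eq) (auto intro: continuous_intros)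
    ultimately show ?thesis by auto
  qed
  define K where "K = sphere (0::complex^'n) 1 \<inter> S"
  have "compact K" unfolding K_def by (intro compact_Int_closed compact_sphere closedS)
  have wS: "w \<in> S" using w by (simp add: S_def)
  have "(1 / norm w) *\<^sub>R w \<in> K" using w(1) Sscale[OF wS] by (simp add: K_def)
  then have "K \<noteq> {}" by blast
  define f where "f = (\<lambda>v::complex^'n. inner v (A *v v))"
  have "continuous_on K f" unfolding f_def
    using continuous_form[of A] by (rule continuous_on_subset) simp
  then obtain u where uK: "u \<in> K" and umax: "\<And>y. y \<in> K \<Longrightarrow> f y \<le> f u"
    using continuous_attains_sup[OF \<open>compact K\<close> \<open>K \<noteq> {}\<close>] by blast
  have nu: "norm u = 1" and uS: "u \<in> S" using uK by (auto simp: K_def)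
  have uu: "inner u u = 1" using nu by (simp add: power2_norm_eq_inner[symmetric])
  define m where "m = f u"
  define z where "z = A *v u - m *\<^sub>R u"
  have zS: "z \<in> S" unfolding z_def by (intro Sdiff Sinv Sscale uS)
  have fscale: "f (c *\<^sub>R v) = c^2 * f v" for c v
    by (simp add: f_def mv_scaleR power2_eq_square)
  have bound: "f v \<le> m * inner v v" if vS: "v \<in> S" for v
  proof (cases "v = 0")
    case True then show ?thesis by (simp add: f_def)
  next
    case False
    then have "(1 / norm v) *\<^sub>R v \<in> K" using Sscale[OF vS] by (simp add: K_def)
    then have "f ((1 / norm v) *\<^sub>R v) \<le> m" using umax by (simp add: m_def)
    then have "f v / (norm v)^2 \<le> m" by (simp add: fscale power_divide)
    then have "f v \<le> m * (norm v)^2" using False by (simp add: divide_le_eq mult.commute)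
    then show ?thesis by (simp add: power2_norm_eq_inner)
  qed
  have sym1: "inner u (A *v z) = inner z (A *v u)"
    using herm_inner[OF herm] by (metis inner_commute)
  have Au: "A *v u = z + m *\<^sub>R u" by (simp add: z_def)
  have uz: "inner u z = inner z u" by (rule inner_commute)
  have quad: "2 * inner z z * t + (inner z (A *v z) - m * inner z z) * t^2 \<le> 0" for t
  proof -
    define a where "a = inner z z"
    define b where "b = inner z u"
    define c where "c = inner z (A *v z)"
    have B: "f (u + t *\<^sub>R z) \<le> m * inner (u + t *\<^sub>R z) (u + t *\<^sub>R z)"
      by (intro bound Sadd uS Sscale zS)
    have F1: "f (u + t *\<^sub>R z) = inner u (A *v u) + 2 * t * inner z (A *v u) + t^2 * inner z (A *v z)"
      by (simp add: f_def mv_add mv_scaleR inner_add_left inner_add_right sym1 power2_eq_square algebra_simps)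
    have F2: "inner (u + t *\<^sub>R z) (u + t *\<^sub>R z) = 1 + 2 * t * b + t^2 * a"
      by (simp add: inner_add_left inner_add_right uu uz a_def b_def power2_eq_square algebra_simps)
    have F3: "inner z (A *v u) = a + m * b"
      by (simp add: Au inner_add_right a_def b_def)
    have F4: "inner u (A *v u) = m" by (simp add: m_def f_def)
    have "m + 2 * t * (a + m * b) + t^2 * c \<le> m * (1 + 2 * t * b + t^2 * a)"
      using B unfolding F1 F2 F3 F4 c_def .
    then have "2 * a * t + (c - m * a) * t^2 \<le> 0" by (simp add: algebra_simps)
    then show ?thesis by (simp add: a_def c_def)
  qed
  have "2 * inner z z = 0"
    by (rule quad_zero[of _ "inner z (A *v z) - m * inner z z"]) (use quad in \<open>simp_all add: mult.commute\<close>)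
  then have "z = 0" by simp
  then have "A *v u = m *\<^sub>R u" by (simp add: z_def)
  then show ?thesis using nu uS by (auto simp: S_def)
qed




lemma scaleR_vec_conv: "(m::real) *\<^sub>R (e::complex^'n) = complex_of_real m *s e"
  by (simp add: vec_eq_iff) (simp add: scaleR_conv_of_real)

lemma spectral:
  fixes A :: "'n::finite cmat"
  assumes herm: "cadj A = A"
  shows "\<exists>V m. unitary_mat V \<and> A = conjd V m"
proof -
  define ON where "ON E \<longleftrightarrow> finite E \<and> (\<forall>e\<in>E. norm e = 1 \<and> (\<exists>m::real. A *v e = m *\<^sub>R e))
      \<and> (\<forall>e\<in>E. \<forall>e'\<in>E. e \<noteq> e' \<longrightarrow> cinner e e' = 0)" for E :: "(complex^'n) set"
  have bnd: "ON E \<longrightarrow> card E < DIM(complex^'n) + 1" for E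
  proof
    assume on: "ON E"
    have "pairwise orthogonal E"
      using on unfolding ON_def pairwise_def orthogonal_def by (simp add: inner_cinner)
    moreover have "0 \<notin> E" using on unfolding ON_def by force
    ultimately have "independent E" by (rule pairwise_orthogonal_independent)
    then show "card E < DIM(complex^'n) + 1" using independent_bound by fastforce
  qed
  have "ON {}" by (simp add: ON_def)
  then obtain E where onE: "ON E" and maxE: "\<And>E'. ON E' \<Longrightarrow> card E' \<le> card E"
    using ex_has_greatest_nat[of ON "{}" card "DIM(complex^'n) + 1"] bnd by blast
  have finE: "finite E" using onE by (simp add: ON_def)
  have ee: "cinner e e = 1" if "e \<in> E" for e
    using onE that by (simp add: ON_def cinner_self)
  have orth: "e \<in> E \<Longrightarrow> e' \<in> E \<Longrightarrow> e \<noteq> e' \<Longrightarrow> cinner e e' = 0" for e e'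
    using onE by (simp add: ON_def)
  have complete0: "w = 0" if w: "\<forall>e\<in>E. cinner e w = 0" for w
  proof (rule ccontr)
    assume "w \<noteq> 0"
    have "\<forall>e\<in>E. \<exists>l. A *v e = l *s e"
      using onE unfolding ON_def scaleR_vec_conv by blast
    then obtain u where u: "norm u = 1" "\<forall>e\<in>E. cinner e u = 0" "\<exists>m::real. A *v u = m *\<^sub>R u"
      using eig_exists[OF herm _ \<open>w \<noteq> 0\<close> w] by blast
    have uu: "cinner u u = 1" using u(1) by (simp add: cinner_self)
    have uE: "u \<notin> E" using u(2) uu by force
    have ue: "cinner u e = 0" if "e \<in> E" for e
      using u(2) that cinner_sym[of u e] by simp
    have "ON (insert u E)"
      using onE u ue unfolding ON_def by auto
    then have "card (insert u E) \<le> card E" by (rule maxE)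
    then show False using uE finE by simp
  qed
  have expand: "x = (\<Sum>e\<in>E. cinner e x *s e)" for x
  proof -
    have "cinner e' (x - (\<Sum>e\<in>E. cinner e x *s e)) = 0" if e': "e' \<in> E" for e'
    proof -
      have "(\<Sum>e\<in>E. cinner e x * cinner e' e) = (\<Sum>e\<in>E. if e = e' then cinner e' x else 0)"
        by (rule sum.cong[OF refl]) (auto simp: orth[OF e'] ee[OF e'])
      also have "\<dots> = cinner e' x" using finE e' by simp
      finally show ?thesis by (simp add: cinner_diff_right cinner_sum_right cinner_scale_right)
    qed
    then have "x - (\<Sum>e\<in>E. cinner e x *s e) = 0" by (intro complete0) blast
    then show ?thesis by simp
  qed
  have cardE: "card E = CARD('n)"
  proof -
    have one: "(\<Sum>e\<in>E. cnj (e$j) * e$j) = 1" for j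
    proof -
      have "(1::complex) = (axis j 1 :: complex^'n) $ j" by (simp add: axis_def)
      also have "\<dots> = (\<Sum>e\<in>E. cinner e (axis j 1) *s e) $ j" using expand by metis
      also have "\<dots> = (\<Sum>e\<in>E. cnj (e$j) * e$j)"
        by (simp add: sum_component cinner_def axis_def if_distrib cong: if_cong)
      finally show ?thesis by simp
    qed
    have "of_nat (CARD('n)) = (\<Sum>j\<in>UNIV. (\<Sum>e\<in>E. cnj (e$j) * e$j) :: complex)"
      by (simp add: one)
    also have "\<dots> = (\<Sum>e\<in>E. cinner e e)" unfolding cinner_def by (rule sum.swap)
    also have "\<dots> = of_nat (card E)" by (simp add: ee)
    finally show ?thesis by (metis of_nat_eq_iff)
  qed
  obtain b where b: "bij_betw b (UNIV::'n set) E"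
    using finite_same_card_bij[of "UNIV::'n set" E] finE cardE by auto
  have bE: "b j \<in> E" for j using b by (auto simp: bij_betw_def)
  have binj: "b i = b j \<Longrightarrow> i = j" for i j using b by (auto simp: bij_betw_def inj_on_def)
  define V :: "'n cmat" where "V = (\<chi> i j. b j $ i)"
  have "cadj V ** V = mat 1"
  proof -
    have "(\<Sum>i\<in>UNIV. cnj (b a $ i) * b c $ i) = (if a = c then 1 else 0)" for a c
    proof -
      have "(\<Sum>i\<in>UNIV. cnj (b a $ i) * b c $ i) = cinner (b a) (b c)" by (simp add: cinner_def)
      then show ?thesis using ee[OF bE] orth[OF bE bE] binj by (cases "a = c") (auto, metis)
    qed
    then show ?thesis by (simp add: vec_eq_iff matrix_matrix_mult_def cadj_def V_def mat_def)
  qed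
  then have uV: "unitary_mat V" by (rule unitary_iff1)
  have "\<exists>m::real. A *v b j = m *\<^sub>R b j" for j using onE bE[of j] by (simp add: ON_def)
  then obtain m :: "'n \<Rightarrow> real" where m: "\<And>j. A *v b j = m j *\<^sub>R b j" by metis
  have AV: "A ** V = V ** dg m"
  proof -
    have "(A ** V) $ i $ j = (A *v b j) $ i" for i j
      by (simp add: matrix_matrix_mult_def matrix_vector_mult_def V_def)
    moreover have "(V ** dg m) $ i $ j = b j $ i * complex_of_real (m j)" for i j
    proof -
      have "\<And>k. V $ i $ k * dg m $ k $ j = (if k = j then b j $ i * complex_of_real (m j) else 0)"
        by (simp add: V_def dg_def)
      then show ?thesis by (simp add: matrix_matrix_mult_def)
    qed
    ultimately show ?thesis by (simp add: vec_eq_iff m scaleR_vec_conv mult.commute)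
  qed
  have "A = A ** (V ** cadj V)" using uV by (simp add: unitary_mat_def)
  also have "\<dots> = conjd V m" by (simp add: matrix_mul_assoc AV)
  finally show ?thesis using uV by blast
qed




definition ind :: "'n set \<Rightarrow> 'n \<Rightarrow> real" where
  "ind S j = (if j \<in> S then 1 else 0)"

lemma conjd_perm:
  fixes W :: "'n::finite cmat"
  assumes uW: "unitary_mat W" and s: "bij s"
  shows "\<exists>W'. unitary_mat W' \<and> conjd W d = conjd W' (d \<circ> s)"
proof -
  define W' :: "'n cmat" where "W' = (\<chi> i j. W $ i $ s j)"
  have bs: "bij_betw s UNIV UNIV" using s by (simp add: bij_def bij_betw_def)
  have "cadj W' ** W' = mat 1"
  proof -
    have "(\<Sum>i\<in>UNIV. cnj (W $ i $ s a) * W $ i $ s c) = (cadj W ** W) $ s a $ s c" for a c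
      by (simp add: matrix_matrix_mult_def cadj_def)
    moreover have "s a = s c \<longleftrightarrow> a = c" for a c using s by (auto simp: bij_def inj_eq)
    ultimately show ?thesis using uW
      by (simp add: vec_eq_iff matrix_matrix_mult_def cadj_def W'_def mat_def unitary_mat_def)
  qed
  then have uW': "unitary_mat W'" by (rule unitary_iff1)
  have "conjd W' (d \<circ> s) $ i $ k = conjd W d $ i $ k" for i k
  proof -
    have "conjd W' (d \<circ> s) $ i $ k = (\<Sum>j\<in>UNIV. (\<lambda>j. W$i$j * complex_of_real (d j) * cnj (W$k$j)) (s j))"
      by (simp add: conjd_entry W'_def)
    also have "\<dots> = (\<Sum>j\<in>UNIV. W$i$j * complex_of_real (d j) * cnj (W$k$j))"
      by (rule sum.reindex_bij_betw[OF bs])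
    finally show ?thesis by (simp add: conjd_entry)
  qed
  then show ?thesis using uW' by (metis vec_eq_iff)
qed

lemma conjd_mult: "unitary_mat W \<Longrightarrow> conjd W r ** conjd W s = conjd W (\<lambda>j. r j * s j)"
proof -
  assume u: "unitary_mat W"
  have "conjd W r ** conjd W s = W ** dg r ** (cadj W ** W) ** dg s ** cadj W"
    by (simp add: matrix_mul_assoc)
  also have "\<dots> = W ** (dg r ** dg s) ** cadj W" using u by (simp add: unitary_mat_def matrix_mul_assoc)
  also have "dg r ** dg s = dg (\<lambda>j. r j * s j)"
  proof -
    have "\<And>i j k. dg r $ i $ k * dg s $ k $ j = (if k = i then (if i = j then complex_of_real (r i * s i) else 0) else 0)"
      by (simp add: dg_def)
    then show ?thesis by (simp add: vec_eq_iff matrix_matrix_mult_def) (simp add: dg_def)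
  qed
  finally show ?thesis .
qed

lemma conjd_inj: "unitary_mat W \<Longrightarrow> conjd W r = conjd W s \<Longrightarrow> r = s"
proof -
  assume u: "unitary_mat W" and e: "conjd W r = conjd W s"
  have "cadj W ** conjd W r ** W = dg r" for r
  proof -
    have "cadj W ** conjd W r ** W = (cadj W ** W) ** dg r ** (cadj W ** W)" by (simp add: matrix_mul_assoc)
    then show ?thesis using u by (simp add: unitary_mat_def)
  qed
  then have "dg r = dg s" using e by metis
  then have "dg r $ j $ j = dg s $ j $ j" for j by simp
  then show "r = s" by (simp add: dg_def fun_eq_iff)
qed

lemma proj_struct:
  fixes P :: "'n::finite cmat"
  assumes "projector P"
  shows "\<exists>W S. unitary_mat W \<and> P = conjd W (ind S)"
proof -
  have h: "cadj P = P" and pp: "P ** P = P" using assms by (auto simp: projector_def)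
  obtain W m where uW: "unitary_mat W" and P: "P = conjd W m" using spectral[OF h] by blast
  have "conjd W (\<lambda>j. m j * m j) = conjd W m" using pp P conjd_mult[OF uW] by simp
  then have "(\<lambda>j. m j * m j) = m" by (rule conjd_inj[OF uW])
  then have "m j * m j = m j" for j by metis
  then have mi: "m = ind {j. m j = 1}" by (auto simp: ind_def fun_eq_iff)
  have "P = conjd W (ind {j. m j = 1})" using P by (subst (asm) mi)
  then show ?thesis using uW by blast
qed

lemma trace_ind: "unitary_mat W \<Longrightarrow> Re (trace (conjd W (ind S))) = real (card S)"
  by (simp add: trace_conjd ind_def sum.If_cases)

lemma perm_exists:
  fixes S T :: "'n::finite set"
  assumes "card S = card T"
  shows "\<exists>s. bij s \<and> (\<forall>j. s j \<in> T \<longleftrightarrow> j \<in> S)"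
proof -
  obtain f where f: "bij_betw f S T" using finite_same_card_bij[of S T] assms by auto
  have "card (- S) = card (- T)" using assms by (simp add: Compl_eq_Diff_UNIV card_Diff_subset)
  then obtain h where h: "bij_betw h (- S) (- T)" using finite_same_card_bij[of "- S" "- T"] by auto
  define s where "s j = (if j \<in> S then f j else h j)" for j
  have "bij_betw s S T" using f by (rule bij_betw_cong[THEN iffD1, rotated]) (simp add: s_def)
  moreover have "bij_betw s (- S) (- T)" using h by (rule bij_betw_cong[THEN iffD1, rotated]) (simp add: s_def)
  ultimately have "bij_betw s (S \<union> - S) (T \<union> - T)" by (rule bij_betw_combine) auto
  then have bs: "bij s" by (simp add: bij_def bij_betw_def)
  have "s j \<in> T \<longleftrightarrow> j \<in> S" for j
    using f h by (cases "j \<in> S") (auto simp: s_def bij_betw_def)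
  then show ?thesis using bs by blast
qed

lemma proj_target:
  fixes P :: "'n::finite cmat"
  assumes "projector P" and "Re (trace P) = real (card T)"
  shows "\<exists>W. unitary_mat W \<and> P = conjd W (ind T)"
proof -
  obtain W S where uW: "unitary_mat W" and P: "P = conjd W (ind S)" using proj_struct[OF assms(1)] by blast
  have "card S = card T" using assms(2) trace_ind[OF uW, of S] P by simp
  then obtain s where s: "bij s" "\<forall>j. s j \<in> S \<longleftrightarrow> j \<in> T" using perm_exists[of T S] by metis
  obtain W' where "unitary_mat W'" "conjd W (ind S) = conjd W' (ind S \<circ> s)" using conjd_perm[OF uW s(1)] by blast
  moreover have "ind S \<circ> s = ind T" using s(2) by (auto simp: ind_def fun_eq_iff)
  ultimately show ?thesis using P by auto
qed




lemma rank1_trace: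
  fixes P :: "'n::finite cmat"
  assumes pp: "P ** P = P" and r: "rank P = 1"
  shows "trace P = 1"
proof -
  obtain B where B: "B \<subseteq> rows P" "vec.independent B" "rows P \<subseteq> vec.span B" "card B = vec.dim (rows P)"
    using vec.basis_exists by blast
  then have "card B = 1" using r by (simp add: row_rank_def_gen)
  then obtain u where Bu: "B = {u}" by (auto simp: card_1_singleton_iff)
  have u0: "u \<noteq> 0" using B(2) Bu vec.dependent_zero by blast
  have "\<forall>i. \<exists>c. row i P = c *s u"
  proof
    fix i
    have "row i P \<in> rows P" by (auto simp: rows_def)
    then have "row i P \<in> range (\<lambda>k. k *s u)" using B(3) Bu vec.span_singleton by blast
    then show "\<exists>c. row i P = c *s u" by auto
  qed
  then obtain c where c: "\<And>i. row i P = c i *s u" by metis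
  have Pe: "P $ i $ j = c i * u $ j" for i j
    using arg_cong[OF c[of i], of "\<lambda>v. v $ j"] by (simp add: row_def)
  obtain i0 where "u = row i0 P" using B(1) Bu by (auto simp: rows_def)
  then have ci0: "c i0 *s u = u" using c by simp
  obtain j0 where j0: "u $ j0 \<noteq> 0" using u0 by (metis vec_eq_iff zero_index)
  have "c i0 * u $ j0 = u $ j0" using arg_cong[OF ci0, of "\<lambda>v. v $ j0"] by simp
  then have c1: "c i0 = 1" using j0 by simp
  have "(P ** P) $ i0 $ j0 = P $ i0 $ j0" using pp by simp
  then have "(\<Sum>k\<in>UNIV. c k * (u $ k * u $ j0)) = u $ j0"
    by (simp add: matrix_matrix_mult_def Pe c1 mult.commute mult.left_commute)
  moreover have "(\<Sum>k\<in>UNIV. c k * (u $ k * u $ j0)) = (\<Sum>k\<in>UNIV. u $ k * c k) * u $ j0"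
    by (simp only: sum_distrib_right) (simp add: algebra_simps)
  ultimately have "(\<Sum>k\<in>UNIV. u $ k * c k) * u $ j0 = u $ j0" by simp
  then have "(\<Sum>k\<in>UNIV. u $ k * c k) = 1" using j0 by simp
  then show ?thesis by (simp add: trace_def Pe mult.commute)
qed


lemma complexity_le:
  assumes "set Us \<subseteq> G"
  shows "circuit_complexity G (circuit_prod Us) \<le> enat (length Us)"
proof -
  have ex: "\<exists>Us'. set Us' \<subseteq> G \<and> circuit_prod Us' = circuit_prod Us" using assms by blast
  have le: "(LEAST r. \<exists>Vs. length Vs = r \<and> set Vs \<subseteq> G \<and> circuit_prod Vs = circuit_prod Us) \<le> length Us"
    by (rule Least_le) (use assms in blast)
  show ?thesis unfolding circuit_complexity_def if_P[OF ex] using le by (simp only: enat_ord_simps)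
qed

lemma conj_in_Minf:
  fixes G :: "'n::finite cmat set"
  assumes univ: "universal_gate_set G" and P: "P \<in> PP" and U: "unitary_mat U"
  shows "cadj U ** P ** U \<in> M_infty G PP"
proof -
  have "U \<in> closure {circuit_prod Us | Us. set Us \<subseteq> G}" using univ U by (simp add: universal_gate_set_def)
  then obtain X where X: "\<And>n. X n \<in> {circuit_prod Us | Us. set Us \<subseteq> G}" and lim: "X \<longlonglongrightarrow> U"
    unfolding closure_sequential by blast
  have mem: "cadj (X n) ** P ** X n \<in> (\<Union>r. M_r G PP r)" for n
  proof -
    obtain Us where "set Us \<subseteq> G" "X n = circuit_prod Us" using X[of n] by blast
    then have "circuit_complexity G (X n) \<le> enat (length Us)" using complexity_le by metis
    then have "cadj (X n) ** P ** X n \<in> M_r G PP (length Us)" using P by (auto simp: M_r_def)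
    then show ?thesis by blast
  qed
  have c: "((\<lambda>n. X n $ a $ b) \<longlongrightarrow> U $ a $ b) sequentially" for a b
    by (rule tendsto_vec_nth, rule tendsto_vec_nth, rule lim)
  have lim2: "(\<lambda>n. cadj (X n) ** P ** X n) \<longlonglongrightarrow> cadj U ** P ** U"
    apply (rule vec_tendstoI)
    apply (rule vec_tendstoI)
    unfolding matrix_matrix_mult_def cadj_def
    apply simp
    by (intro tendsto_sum tendsto_mult tendsto_const tendsto_cnj c)
  show ?thesis unfolding M_infty_def closure_sequential
    by (rule exI[of _ "\<lambda>n. cadj (X n) ** P ** X n"]) (use mem lim2 in blast)
qed


lemma opnorm_conjd:
  assumes u: "unitary_mat V" and r: "\<And>j. \<bar>r j\<bar> \<le> g"
  shows "op_norm (conjd V r) \<le> g"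
  unfolding op_norm_def
proof (rule onorm_le)
  fix x :: "complex^'a"
  define w where "w = cadj V *v x"
  have xw: "x = V *v w" using u by (simp add: w_def matrix_vector_mul_assoc unitary_mat_def)
  have nw: "norm w = norm x" using unitary_cadj[OF u] by (simp add: w_def norm_unitary)
  have g0: "0 \<le> g" using r by (meson abs_ge_zero order_trans)
  have "norm (conjd V r *v x) = norm (dg r *v w)" by (simp add: xw conjd_vec[OF u] norm_unitary[OF u])
  also have "\<dots> \<le> norm (g *\<^sub>R w)"
  proof (rule norm_le_componentwise_cart)
    fix j
    have "norm ((dg r *v w) $ j) = \<bar>r j\<bar> * norm (w $ j)" by (simp add: dg_mult_vec norm_mult)
    also have "\<dots> \<le> g * norm (w $ j)" using r by (simp add: mult_right_mono)
    also have "\<dots> = norm ((g *\<^sub>R w) $ j)" using g0 by simp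
    finally show "norm ((dg r *v w) $ j) \<le> norm ((g *\<^sub>R w) $ j)" .
  qed
  also have "\<dots> = g * norm x" using g0 nw by simp
  finally show "norm (conjd V r *v x) \<le> g * norm x" .
qed

lemma q_bound:
  fixes t1 t2 L :: real and X :: "real set"
  assumes t1: "1 \<le> t1" and t12: "t1 \<le> t2" and L: "ln t2 \<le> L"
    and X: "\<And>x. x \<in> X \<Longrightarrow> x \<le> ln t1 \<or> ln t2 \<le> x"
  shows "ln t2 - ln t1 \<le> Sup {b - a | a b. {a<..<b} \<subseteq> {0..L} - X}"
proof (rule cSup_upper)
  have "{ln t1<..<ln t2} \<subseteq> {0..L} - X"
  proof
    fix x assume x: "x \<in> {ln t1<..<ln t2}"
    have "0 \<le> ln t1" using t1 by simp
    then show "x \<in> {0..L} - X" using x L X by force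
  qed
  then show "ln t2 - ln t1 \<in> {b - a | a b. {a<..<b} \<subseteq> {0..L} - X}" by blast
  have L0: "0 \<le> L" using t1 t12 L by (meson ln_ge_zero order_trans)
  show "bdd_above {b - a | a b. {a<..<b} \<subseteq> {0..L} - X}"
  proof (rule bdd_aboveI[of _ "3 * L"])
    fix y assume "y \<in> {b - a | a b. {a<..<b} \<subseteq> {0..L} - X}"
    then obtain a b where y: "y = b - a" and ab: "{a<..<b} \<subseteq> {0..L} - X" by blast
    show "y \<le> 3 * L"
    proof (cases "b \<le> a")
      case True then show ?thesis using y L0 by simp
    next
      case False
      define d where "d = (b - a) / 3"
      have d1: "0 < d" using False by (simp add: d_def)
      have d2: "b = a + 3 * d" by (simp add: d_def field_simps)
      note d = d1 d2
      have m1: "a + d \<in> {a<..<b}" and m2: "a + 2 * d \<in> {a<..<b}" using d by auto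
      have "a + d \<in> {0..L}" using ab m1 by blast
      moreover have "a + 2 * d \<in> {0..L}" using ab m2 by blast
      ultimately have "0 \<le> a + d" "a + 2 * d \<le> L" by auto
      then show ?thesis using y d by simp
    qed
  qed
qed




lemma conj_back:
  assumes "unitary_mat W" "unitary_mat V"
  shows "cadj (W ** cadj V) ** conjd W r ** (W ** cadj V) = conjd V r"
proof -
  have "cadj (W ** cadj V) ** conjd W r ** (W ** cadj V) = V ** (cadj W ** W) ** dg r ** (cadj W ** W) ** cadj V"
    by (simp add: cadj_mult matrix_mul_assoc)
  then show ?thesis using assms by (simp add: unitary_mat_def)
qed

lemma qb_lemma:
  fixes PP :: "'n::finite cmat set" and t1 t2 k :: nat
  assumes t1_1: "1 \<le> t1" and t12: "t1 \<le> t2" and t2n: "t2 \<le> CARD('n)"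
  and trP: "\<And>P. P \<in> PP \<Longrightarrow> \<exists>t. t \<in> Tr \<and> Re (trace P) = real t"
  and t1ge: "\<And>s. s \<in> Tr \<Longrightarrow> s \<le> k \<Longrightarrow> s \<le> t1"
  and t2le: "\<And>s. s \<in> Tr \<Longrightarrow> k \<le> s \<Longrightarrow> t2 \<le> s"
  shows "ln (real t2) - ln (real t1) \<le> Sup {b - a | a b. {a<..<b} \<subseteq> {0..ln (real CARD('n))} - {ln (Re (trace P)) | P. P \<in> PP}}"
    proof (rule q_bound)
      show "1 \<le> real t1" using t1_1 by simp
      show "real t1 \<le> real t2" using t12 by simp
      have "0 < real t2" using t12 t1_1 by simp
      then show "ln (real t2) \<le> ln (real CARD('n))" using t2n by simp
      fix x assume "x \<in> {ln (Re (trace P)) | P. P \<in> PP}"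
      then obtain P where P: "P \<in> PP" "x = ln (Re (trace P))" by blast
      obtain s where s: "s \<in> Tr" "Re (trace P) = real s" using trP[OF P(1)] by blast
      have xs: "x = ln (real s)" using P(2) s(2) by simp
      show "x \<le> ln (real t1) \<or> ln (real t2) \<le> x"
      proof (cases "s = 0")
        case True then have "x = 0" using xs by simp
        moreover have "0 \<le> ln (real t1)" using t1_1 by simp
        ultimately show ?thesis by simp
      next
        case False
        then have s0: "0 < real s" by simp
        show ?thesis
        proof (cases "s \<le> k")
          case True then have "s \<le> t1" using t1ge s(1) by blast
          then have "ln (real s) \<le> ln (real t1)" using s0 by simp
          then show ?thesis using xs by simp
        next
          case False then have "t2 \<le> s" using t2le s(1) by simp
          then have "ln (real t2) \<le> ln (real s)" using t12 t1_1 by simp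
          then show ?thesis using xs by simp
        qed
      qed
    qed

theorem propositionI4:
  fixes G :: "('n::finite) cmat set" and PP :: "'n cmat set"
  assumes "mat 1 \<in> G" and "\<forall>U\<in>G. unitary_mat U" and "universal_gate_set G"
    and "\<forall>P\<in>PP. projector P" and "mat 1 \<in> PP" and "\<exists>P\<in>PP. rank P = 1"
  defines "q \<equiv> Sup {b - a | a b. {a<..<b} \<subseteq> {0..ln (real CARD('n))} - {ln (Re (trace P)) | P. P \<in> PP}}"
  shows "quasiuniversal (M_infty G PP) q (mat 1)"
proof -
  note univ = assms(3) and projs = assms(4) and onePP = assms(5) and rk1 = assms(6)
  define Tr where "Tr = {t::nat. \<exists>P\<in>PP. Re (trace P) = real t}"
  have trP: "\<exists>t. t \<in> Tr \<and> Re (trace P) = real t" if Pin: "P \<in> PP" for P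
  proof -
    obtain W S where "unitary_mat W" "P = conjd W (ind S)" using proj_struct projs Pin by blast
    then have "Re (trace P) = real (card S)" using trace_ind by blast
    then show ?thesis using Pin by (auto simp: Tr_def)
  qed
  have one_Tr: "1 \<in> Tr"
  proof -
    obtain P where "P \<in> PP" "rank P = 1" using rk1 by blast
    moreover then have "P ** P = P" using projs by (simp add: projector_def)
    ultimately have "trace P = 1" "P \<in> PP" using rank1_trace by blast+
    then show ?thesis by (auto simp: Tr_def intro!: bexI[of _ P])
  qed
  have n_Tr: "CARD('n) \<in> Tr"
    using onePP by (auto simp: Tr_def trace_I intro!: bexI[of _ "mat 1"])
  show ?thesis unfolding quasiuniversal_def
  proof (intro allI impI)
    fix Q :: "'n cmat" and g :: real
    assume H: "povm_effect Q \<and> op_norm Q = 1 \<and> 0 < g \<and> g < 1"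
    then have psdQ: "psd Q" and psd1Q: "psd (mat 1 - Q)" and nQ: "op_norm Q = 1" and g: "0 < g" "g < 1"
      by (auto simp: povm_effect_def loewner_le_def)
    obtain V lam where uV: "unitary_mat V" and Q: "Q = conjd V lam"
      using spectral[OF psd_herm[OF psdQ]] by blast
    have lam0: "0 \<le> lam j" for j using psd_conjd_nonneg[OF uV] psdQ Q by blast
    have "mat 1 - Q = conjd V (\<lambda>_. 1) - conjd V lam" using conjd_one[OF uV] Q by simp
    also have "\<dots> = conjd V (\<lambda>j. 1 - lam j)" by (rule conjd_diff)
    finally have m1Q: "mat 1 - Q = conjd V (\<lambda>j. 1 - lam j)" .
    have lam1: "lam j \<le> 1" for j using psd_conjd_nonneg[OF uV, of "\<lambda>j. 1 - lam j" j] psd1Q m1Q by simp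
    define K where "K = {j. g < lam j}"
    have "K \<noteq> {}"
    proof
      assume "K = {}"
      then have "\<bar>lam j\<bar> \<le> g" for j using lam0[of j] by (auto simp: K_def not_less)
      then have "op_norm Q \<le> g" unfolding Q by (rule opnorm_conjd[OF uV])
      then show False using nQ g by simp
    qed
    define k where "k = card K"
    have k1: "1 \<le> k" using \<open>K \<noteq> {}\<close> by (simp add: k_def Suc_le_eq card_gt_0_iff)
    have kn: "k \<le> CARD('n)" by (simp add: k_def card_mono)
    define A1 where "A1 = {t\<in>Tr. t \<le> k}"
    have finA1: "finite A1" by (rule finite_subset[of _ "{..k}"]) (auto simp: A1_def)
    have "1 \<in> A1" using one_Tr k1 by (simp add: A1_def)
    define t1 where "t1 = Max A1"
    have t1A: "t1 \<in> A1" using finA1 \<open>1 \<in> A1\<close> unfolding t1_def by (intro Max_in) auto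
    have t1ge: "s \<le> t1" if "s \<in> Tr" "s \<le> k" for s
      using finA1 that unfolding t1_def by (intro Max_ge) (auto simp: A1_def)
    have t1_1: "1 \<le> t1" using t1ge[OF one_Tr k1] .
    have t1k: "t1 \<le> k" "t1 \<in> Tr" using t1A by (auto simp: A1_def)
    define t2 where "t2 = (LEAST t. t \<in> Tr \<and> k \<le> t)"
    have t2P: "t2 \<in> Tr \<and> k \<le> t2" unfolding t2_def by (rule LeastI[of _ "CARD('n)"]) (use n_Tr kn in blast)
    have t2le: "t2 \<le> s" if "s \<in> Tr" "k \<le> s" for s unfolding t2_def by (rule Least_le) (use that in blast)
    have t2n: "t2 \<le> CARD('n)" using t2le[OF n_Tr kn] .
    obtain P1 where P1: "P1 \<in> PP" "Re (trace P1) = real t1" using t1k(2) by (auto simp: Tr_def)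
    obtain P2 where P2: "P2 \<in> PP" "Re (trace P2) = real t2" using t2P by (auto simp: Tr_def)
    obtain S1 where S1: "S1 \<subseteq> K" "card S1 = t1"
      using obtain_subset_with_card_n[of t1 K] t1k(1) by (auto simp: k_def)
    have "card (- K) = CARD('n) - k" by (simp add: k_def Compl_eq_Diff_UNIV card_Diff_subset)
    then have "t2 - k \<le> card (- K)" using t2n by simp
    then obtain R where R: "R \<subseteq> - K" "card R = t2 - k"
      using obtain_subset_with_card_n[of "t2 - k" "- K"] by blast
    define S2 where "S2 = K \<union> R"
    have KS2: "K \<subseteq> S2" by (simp add: S2_def)
    have cS2: "card S2 = t2" unfolding S2_def using R t2P
      by (subst card_Un_disjoint) (auto simp: k_def)
    have pr1: "projector P1" using projs P1(1) by blast
    have pr2: "projector P2" using projs P2(1) by blast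
    have "Re (trace P1) = real (card S1)" using P1(2) S1(2) by simp
    then obtain W1 where uW1: "unitary_mat W1" and W1: "P1 = conjd W1 (ind S1)"
      using proj_target[OF pr1] by blast
    have "Re (trace P2) = real (card S2)" using P2(2) cS2 by simp
    then obtain W2 where uW2: "unitary_mat W2" and W2: "P2 = conjd W2 (ind S2)"
      using proj_target[OF pr2] by blast
    define Qt where "Qt = conjd V (ind S1)"
    define Qt' where "Qt' = conjd V (ind S2)"
    have uU1: "unitary_mat (W1 ** cadj V)" by (intro unitary_mult unitary_cadj uW1 uV)
    have uU2: "unitary_mat (W2 ** cadj V)" by (intro unitary_mult unitary_cadj uW2 uV)
    have QtM: "Qt \<in> M_infty G PP"
      using conj_in_Minf[OF univ P1(1) uU1] unfolding W1 conj_back[OF uW1 uV] Qt_def .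
    have Qt'M: "Qt' \<in> M_infty G PP"
      using conj_in_Minf[OF univ P2(1) uU2] unfolding W2 conj_back[OF uW2 uV] Qt'_def .
    have ineq1: "loewner_le (g *\<^sub>R Qt) Q"
    proof -
      have "Q - g *\<^sub>R Qt = conjd V (\<lambda>j. lam j - g * ind S1 j)"
        unfolding Q Qt_def conjd_scale conjd_diff ..
      moreover have "0 \<le> lam j - g * ind S1 j" for j
      proof (cases "j \<in> S1")
        case True then have "g < lam j" using S1(1) by (auto simp: K_def)
        then show ?thesis using True by (simp add: ind_def)
      next
        case False then show ?thesis using lam0[of j] by (simp add: ind_def)
      qed
      ultimately show ?thesis unfolding loewner_le_def by (simp add: psd_conjd[OF uV])
    qed
    have ineq2: "loewner_le Q ((1 - g) *\<^sub>R Qt' + g *\<^sub>R mat 1)"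
    proof -
      have "(1 - g) *\<^sub>R Qt' + g *\<^sub>R mat 1 - Q = conjd V (\<lambda>j. (1 - g) * ind S2 j + g * 1 - lam j)"
        unfolding Q Qt'_def conjd_one[OF uV] conjd_scale conjd_add conjd_diff ..
      moreover have "0 \<le> (1 - g) * ind S2 j + g * 1 - lam j" for j
      proof (cases "j \<in> S2")
        case True then show ?thesis using lam1[of j] by (simp add: ind_def)
      next
        case False then have "\<not> g < lam j" using KS2 by (auto simp: K_def)
        then show ?thesis using False by (simp add: ind_def)
      qed
      ultimately show ?thesis unfolding loewner_le_def by (simp add: psd_conjd[OF uV])
    qed
    have tr1: "Re (trace (Qt ** mat 1)) = real t1" using trace_ind[OF uV] S1 by (simp add: Qt_def)
    have tr2: "Re (trace (Qt' ** mat 1)) = real t2" using trace_ind[OF uV] cS2 by (simp add: Qt'_def)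
    have t12: "t1 \<le> t2" using t1k t2P by linarith
    have qb: "ln (real t2) - ln (real t1) \<le> q"
      unfolding q_def using t1_1 t12 t2n trP t1ge t2le by (rule qb_lemma)
    show "\<exists>Qt Qt'. Qt \<in> M_infty G PP \<and> Qt' \<in> M_infty G PP \<and>
           loewner_le (g *\<^sub>R Qt) Q \<and>
           loewner_le Q ((1 - g) *\<^sub>R Qt' + g *\<^sub>R mat 1) \<and>
           0 < Re (trace (Qt ** mat 1)) \<and> 0 < Re (trace (Qt' ** mat 1)) \<and>
           ln (Re (trace (Qt' ** mat 1))) - ln (Re (trace (Qt ** mat 1))) \<le> q"
    proof (intro exI conjI)
      show "0 < Re (trace (Qt ** mat 1))" using tr1 t1_1 by simp
      show "0 < Re (trace (Qt' ** mat 1))" using tr2 t1_1 t12 by simp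
      show "ln (Re (trace (Qt' ** mat 1))) - ln (Re (trace (Qt ** mat 1))) \<le> q"
        unfolding tr1 tr2 by (rule qb)
    qed (fact QtM Qt'M ineq1 ineq2)+
  qed
qed


end
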